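(* Let $\mathrm{2RR}=\textsc{RoundRobin}(\mathrm{ALG}_{\mathrm{fail}},\mathrm{ALG}_{\mathrm{succ}};1,1)$. Then for every instance $I$ of Stochastic Score Classification, $$\mathbb{E}[\mathrm{cost}(\mathrm{2RR},I)]\le 6\cdot \mathbb{E}[\mathrm{cost}(\mathrm{OPT},I)],$$ i.e., $\mathrm{2RR}$ is a 6-approximation algorithm for SSC.
   Context: An instance $I$ of Stochastic Score Classification (SSC) consists of tests $N=\{1,\dots,n\}$, costs $c_j\ge 0$, success probabilities $p_j\in(0,1)$, and integers $0=t_1<t_2<\dots<t_B<t_{B+1}=n+1$. The outcome vector $x\in\{0,1\}^N$ has independent coordinates with $\Pr[x_j=1]=p_j$ (test $j$ succeeds iff $x_j=1$, otherwise it fails). The score $f(x)$ is the unique $i\in\{1,\dots,B\}$ with $t_i\le\|x\|_1\le t_{i+1}-1$. A (possibly adaptive) strategy conducts tests one at a time, each at most once, the choice of the next test possibly depending on outcomes observed so far, and stops as soon as $f(x)$ is determined (i.e., all $x'\in\{0,1\}^N$ agreeing with $x$ on the conducted tests have $f(x')=f(x)$). $\mathrm{cost}(S,I)$ is the random total cost of the tests conducted by strategy $S$ on $I$. $\mathrm{OPT}$ is a fixed strategy minimizing $\mathbb{E}[\mathrm{cost}(S,I)]$ over all adaptive strategies $S$. Let $\sigma_{\mathrm{fail}},\sigma_{\mathrm{succ}}$ be permutations of $N$ (ties broken arbitrarily) such that $c_{\sigma_{\mathrm{fail}}(1)}/(1-p_{\sigma_{\mathrm{fail}}(1)})\le\dots\le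 c_{\sigma_{\mathrm{fail}}(n)}/(1-p_{\sigma_{\mathrm{fail}}(n)})$ and $c_{\sigma_{\mathrm{succ}}(1)}/p_{\sigma_{\mathrm{succ}}(1)}\le\dots\le c_{\sigma_{\mathrm{succ}}(n)}/p_{\sigma_{\mathrm{succ}}(n)}$. $\mathrm{ALG}_{\mathrm{fail}},\mathrm{ALG}_{\mathrm{succ}}$ denote the orders of tests given by $\sigma_{\mathrm{fail}},\sigma_{\mathrm{succ}}$. $\textsc{RoundRobin}(\mathrm{ALG}_1,\dots,\mathrm{ALG}_k;\alpha_1,\dots,\alpha_k)$, for fixed orders $\mathrm{ALG}_h$ of $N$ and weights $\alpha_h>0$: initialize $C_h=0$ for all $h$; while $f(x)$ is not determined, for each $h$ let $\delta_h$ be the cost of the first test in the order $\mathrm{ALG}_h$ that has not yet been conducted by the scheme, choose $h^\star\in\arg\min_h (C_h+\delta_h)/\alpha_h$ (ties arbitrary), conduct that test of $\mathrm{ALG}_{h^\star}$, and set $C_{h^\star}\leftarrow C_{h^\star}+\delta_{h^\star}$. *)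

theory Defs
  imports Complex_Main
begin

text \<open>Tests are N = {1..n}. An outcome vector x is represented by the set X of
succeeding tests (X \<subseteq> {1..n}). Thresholds t 1 = 0 < t 2 < ... < t (B+1) = n+1.\<close>

definition score :: "nat \<Rightarrow> (nat \<Rightarrow> nat) \<Rightarrow> nat \<Rightarrow> nat" where
  "score B t k = (THE i. i \<in> {1..B} \<and> t i \<le> k \<and> k \<le> t (i+1) - 1)"

definition determined :: "nat \<Rightarrow> nat \<Rightarrow> (nat \<Rightarrow> nat) \<Rightarrow> nat set \<Rightarrow> nat set \<Rightarrow> bool" where
  "determined n B t T X \<longleftrightarrow>
     (\<forall>X'. X' \<subseteq> {1..n} \<longrightarrow> X' \<inter> T = X \<inter> T \<longrightarrow> score B t (card X') = score B t (card X))"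

definition prob :: "nat \<Rightarrow> (nat \<Rightarrow> real) \<Rightarrow> nat set \<Rightarrow> real" where
  "prob n p X = (\<Prod>j\<in>X. p j) * (\<Prod>j\<in>{1..n} - X. 1 - p j)"

text \<open>A history is the list of (test, outcome) pairs observed so far.\<close>
definition cost :: "(nat \<Rightarrow> real) \<Rightarrow> (nat \<times> bool) list \<Rightarrow> real" where
  "cost c h = (\<Sum>(j,b)\<leftarrow>h. c j)"

definition expected_cost ::
  "nat \<Rightarrow> (nat \<Rightarrow> real) \<Rightarrow> (nat \<Rightarrow> real) \<Rightarrow> (nat set \<Rightarrow> (nat \<times> bool) list) \<Rightarrow> real" where
  "expected_cost n p c run = (\<Sum>X\<in>Pow {1..n}. prob n p X * cost c (run X))"

definition valid_strategy :: "nat \<Rightarrow> ((nat \<times> bool) list \<Rightarrow> nat) \<Rightarrow> bool" where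
  "valid_strategy n \<sigma> \<longleftrightarrow>
     (\<forall>h. distinct (map fst h) \<and> set (map fst h) \<subseteq> {1..n} \<and> length h < n
          \<longrightarrow> \<sigma> h \<in> {1..n} - set (map fst h))"

text \<open>Execution of an adaptive strategy on outcome X (fuel bounds number of steps;
n steps always suffice for valid strategies).\<close>
primrec strat_run ::
  "nat \<Rightarrow> nat \<Rightarrow> (nat \<Rightarrow> nat) \<Rightarrow> ((nat \<times> bool) list \<Rightarrow> nat) \<Rightarrow> nat set \<Rightarrow> nat
     \<Rightarrow> (nat \<times> bool) list \<Rightarrow> (nat \<times> bool) list" where
  "strat_run n B t \<sigma> X 0 h = h"
| "strat_run n B t \<sigma> X (Suc k) h =
     (if determined n B t (set (map fst h)) X then h
      else strat_run n B t \<sigma> X k (h @ [(\<sigma> h, \<sigma> h \<in> X)]))"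

definition strategy_outcome ::
  "nat \<Rightarrow> nat \<Rightarrow> (nat \<Rightarrow> nat) \<Rightarrow> ((nat \<times> bool) list \<Rightarrow> nat) \<Rightarrow> nat set \<Rightarrow> (nat \<times> bool) list" where
  "strategy_outcome n B t \<sigma> X = strat_run n B t \<sigma> X n []"

text \<open>RoundRobin(ALG_1, ALG_2; 1, 1). Ties in the argmin are broken by an arbitrary
rule tb (tb h = True means choose ALG_1), which may depend on the history.\<close>
primrec rr_run ::
  "nat \<Rightarrow> nat \<Rightarrow> (nat \<Rightarrow> nat) \<Rightarrow> (nat \<Rightarrow> real) \<Rightarrow> nat list \<Rightarrow> nat list
     \<Rightarrow> ((nat \<times> bool) list \<Rightarrow> bool) \<Rightarrow> nat set \<Rightarrow> nat \<Rightarrow> real \<Rightarrow> real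
     \<Rightarrow> (nat \<times> bool) list \<Rightarrow> (nat \<times> bool) list" where
  "rr_run n B t c o1 o2 tb X 0 C1 C2 h = h"
| "rr_run n B t c o1 o2 tb X (Suc k) C1 C2 h =
     (if determined n B t (set (map fst h)) X then h
      else
        (let T = set (map fst h);
             j1 = hd (filter (\<lambda>j. j \<notin> T) o1);
             j2 = hd (filter (\<lambda>j. j \<notin> T) o2);
             v1 = (C1 + c j1);
             v2 = (C2 + c j2)
         in if v1 < v2 \<or> (v1 = v2 \<and> tb h)
            then rr_run n B t c o1 o2 tb X k (C1 + c j1) C2 (h @ [(j1, j1 \<in> X)])
            else rr_run n B t c o1 o2 tb X k C1 (C2 + c j2) (h @ [(j2, j2 \<in> X)])))"

definition two_rr_outcome ::
  "nat \<Rightarrow> nat \<Rightarrow> (nat \<Rightarrow> nat) \<Rightarrow> (nat \<Rightarrow> real) \<Rightarrow> nat list \<Rightarrow> nat list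
     \<Rightarrow> ((nat \<times> bool) list \<Rightarrow> bool) \<Rightarrow> nat set \<Rightarrow> (nat \<times> bool) list" where
  "two_rr_outcome n B t c o1 o2 tb X = rr_run n B t c o1 o2 tb X n 0 0 []"

definition is_order :: "nat \<Rightarrow> nat list \<Rightarrow> bool" where
  "is_order n os \<longleftrightarrow> distinct os \<and> set os = {1..n}"

end

theory Submission
  imports Defs
begin


locale thr =
  fixes n B :: nat and t :: "nat \<Rightarrow> nat"
  assumes t_first: "t 1 = 0"
    and t_last: "t (B + 1) = n + 1"
    and t_incr: "\<forall>i\<in>{1..B}. t i < t (i + 1)"
begin

lemma B_pos: "B \<ge> 1"
  using t_first t_last by (cases B) auto

lemma t_mono: assumes "1 \<le> i" "i \<le> i'" "i' \<le> B + 1" shows "t i \<le> t i'"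
  using assms(2,3)
proof (induction i' rule: dec_induct)
  case base then show ?case by simp
next
  case (step m)
  then have "t m < t (m+1)" using t_incr assms(1) by auto
  with step show ?case by simp
qed

lemma score_unique:
  assumes "i \<in> {1..B}" "t i \<le> k" "k < t (i+1)"
  shows "score B t k = i"
  unfolding score_def
proof (rule the_equality)
  show "i \<in> {1..B} \<and> t i \<le> k \<and> k \<le> t (i + 1) - 1" using assms by auto
next
  fix i' assume h: "i' \<in> {1..B} \<and> t i' \<le> k \<and> k \<le> t (i' + 1) - 1"
  then have "t i' < t (i'+1)" using t_incr by auto
  then have k': "k < t (i'+1)" using h by linarith
  show "i' = i"
  proof (rule ccontr)
    assume "i' \<noteq> i"
    then consider "i' < i" | "i < i'" by linarith
    then show False
    proof cases
      case 1
      then have "t (i'+1) \<le> t i" using h assms by (intro t_mono) auto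
      then show ?thesis using k' assms by linarith
    next
      case 2
      then have "t (i+1) \<le> t i'" using h assms by (intro t_mono) auto
      then show ?thesis using h assms by linarith
    qed
  qed
qed

lemma score_spec:
  assumes "k \<le> n"
  shows "score B t k \<in> {1..B} \<and> t (score B t k) \<le> k \<and> k < t (score B t k + 1)"
proof -
  define i where "i = Max {i\<in>{1..B}. t i \<le> k}"
  have fin: "finite {i\<in>{1..B}. t i \<le> k}" by auto
  have ne: "1 \<in> {i\<in>{1..B}. t i \<le> k}" using B_pos t_first by auto
  have i_in: "i \<in> {i\<in>{1..B}. t i \<le> k}" unfolding i_def using fin ne
    by (metis (no_types, lifting) Max_in empty_iff)
  have "k < t (i+1)"
  proof (cases "i = B")
    case True then show ?thesis using t_last assms by simp
  next
    case False
    then have "i + 1 \<in> {1..B}" using i_in by auto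
    moreover have "\<not> (i + 1 \<le> i)" by simp
    ultimately have "\<not> t (i+1) \<le> k"
      using Max_ge[OF fin, of "i+1"] unfolding i_def[symmetric] by auto
    then show ?thesis by simp
  qed
  then have "score B t k = i" using i_in by (intro score_unique) auto
  then show ?thesis using i_in \<open>k < t (i+1)\<close> by auto
qed

lemma score_mono:
  assumes "k \<le> k'" "k' \<le> n"
  shows "score B t k \<le> score B t k'"
proof (rule ccontr)
  assume nt: "\<not> ?thesis"
  have s: "score B t k \<in> {1..B} \<and> t (score B t k) \<le> k \<and> k < t (score B t k + 1)"
    using score_spec[of k] assms by linarith
  have s': "score B t k' \<in> {1..B} \<and> t (score B t k') \<le> k' \<and> k' < t (score B t k' + 1)"
    using score_spec[of k'] assms by linarith
  have "t (score B t k' + 1) \<le> t (score B t k)"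
    using s s' nt by (intro t_mono) auto
  then show False using s s' assms by linarith
qed

definition lo :: "nat set \<Rightarrow> nat" where "lo X = t (score B t (card X))"
definition hi :: "nat set \<Rightarrow> nat" where "hi X = t (score B t (card X) + 1)"

lemma lo_hi:
  assumes "X \<subseteq> {1..n}"
  shows "lo X \<le> card X" "card X < hi X" "hi X \<le> n + 1"
proof -
  have c: "card X \<le> n" using card_mono[OF _ assms] by simp
  show "lo X \<le> card X" "card X < hi X" using score_spec[OF c] unfolding lo_def hi_def by auto
  show "hi X \<le> n + 1" using score_spec[OF c] t_mono[of "score B t (card X) + 1" "B+1"] t_last
    unfolding hi_def by auto
qed

lemma lo_hi_mono:
  assumes "X \<subseteq> Y" "Y \<subseteq> {1..n}"
  shows "lo X \<le> lo Y" "hi X \<le> hi Y"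
proof -
  have cY: "card Y \<le> n" using card_mono[OF _ assms(2)] by simp
  have cXY: "card X \<le> card Y" using card_mono[OF finite_subset[OF assms(2)] assms(1)] by simp
  have m: "score B t (card X) \<le> score B t (card Y)" using score_mono[OF cXY cY] .
  have sX: "score B t (card X) \<in> {1..B}" using score_spec[of "card X"] cXY cY by linarith
  have sY: "score B t (card Y) \<in> {1..B}" using score_spec[of "card Y"] cY by linarith
  show "lo X \<le> lo Y" unfolding lo_def using m sX sY by (intro t_mono) auto
  show "hi X \<le> hi Y" unfolding hi_def using m sX sY by (intro t_mono) auto
qed

lemma det_iff:
  assumes T: "T \<subseteq> {1..n}" and X: "X \<subseteq> {1..n}"
  shows "determined n B t T X \<longleftrightarrow>
          lo X \<le> card (T \<inter> X) \<and> card (T \<inter> X) + card ({1..n} - T) < hi X"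
proof -
  let ?N = "{1..n}"
  define a where "a = card (T \<inter> X)"
  define u where "u = card (?N - T)"
  define i where "i = score B t (card X)"
  have finN: "finite ?N" by simp
  have cardX: "card X \<le> n" using card_mono[OF finN X] by simp
  have si: "i \<in> {1..B} \<and> t i \<le> card X \<and> card X < t (i + 1)"
    using score_spec[OF cardX] unfolding i_def by auto
  have a_le: "a \<le> card X" unfolding a_def by (rule card_mono) (use X finite_subset in auto)
  have U: "card (X \<union> (?N - T)) = a + u"
  proof -
    have "X \<union> (?N - T) = (T \<inter> X) \<union> (?N - T)" using X by auto
    moreover have "card ((T \<inter> X) \<union> (?N - T)) = a + u" unfolding a_def u_def
      by (rule card_Un_disjoint) (use X finite_subset in auto)
    ultimately show ?thesis by simp
  qed
  have au_le: "a + u \<le> n"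
  proof -
    have "X \<union> (?N - T) \<subseteq> ?N" using X by auto
    then have "card (X \<union> (?N - T)) \<le> n" using card_mono[OF finN, of "X \<union> (?N - T)"] by simp
    with U show ?thesis by simp
  qed
  have Xle: "card X \<le> a + u"
    using card_mono[of "X \<union> (?N - T)" X] U X finite_subset[OF X finN] by auto
  have "determined n B t T X \<longleftrightarrow> score B t a = i \<and> score B t (a+u) = i"
  proof
    assume d: "determined n B t T X"
    have "X \<inter> T \<subseteq> ?N" "(X \<inter> T) \<inter> T = X \<inter> T" using X by auto
    then have 1: "score B t (card (X \<inter> T)) = i"
      using d unfolding determined_def i_def by blast
    have "(X \<union> (?N - T)) \<inter> T = X \<inter> T" "X \<union> (?N - T) \<subseteq> ?N" using X by auto
    then have 2: "score B t (card (X \<union> (?N - T))) = i"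
      using d unfolding determined_def i_def by blast
    show "score B t a = i \<and> score B t (a+u) = i" using 1 2 U unfolding a_def
      by (simp add: Int_commute)
  next
    assume h: "score B t a = i \<and> score B t (a+u) = i"
    show "determined n B t T X" unfolding determined_def
    proof (intro allI impI)
      fix X' assume X': "X' \<subseteq> ?N" "X' \<inter> T = X \<inter> T"
      have "X' = (T \<inter> X) \<union> (X' - T)" using X' by auto
      have "card (T \<inter> X) \<le> card X'" using X' by (intro card_mono) (auto intro: finite_subset)
      then have l: "a \<le> card X'" unfolding a_def .
      have "card X' \<le> card (X \<union> (?N - T))" using X' X finite_subset[OF X finN]
        by (intro card_mono) auto
      then have r: "card X' \<le> a + u" using U by simp
      have "score B t a \<le> score B t (card X')" using l r au_le by (intro score_mono) auto
      moreover have "score B t (card X') \<le> score B t (a+u)" using r au_le by (intro score_mono) auto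
      ultimately show "score B t (card X') = score B t (card X)" using h unfolding i_def by simp
    qed
  qed
  also have "\<dots> \<longleftrightarrow> lo X \<le> a \<and> a + u < hi X"
  proof -
    have "score B t a = i \<longleftrightarrow> t i \<le> a"
      using score_spec[of a] score_unique[of i a] si a_le cardX by auto
    moreover have "score B t (a+u) = i \<longleftrightarrow> a + u < t (i+1)"
      using score_spec[of "a+u"] score_unique[of i "a+u"] si Xle au_le by auto
    ultimately show ?thesis unfolding lo_def hi_def i_def by simp
  qed
  finally show ?thesis unfolding a_def u_def .
qed

end


context thr begin

lemma card_partition:
  assumes T: "T \<subseteq> {1..n}" and X: "X \<subseteq> {1..n}"
  shows "card (T \<inter> X) + card ({1..n} - T) + card (T \<inter> ({1..n} - X)) = n"
proof -
  have "{1..n} = ((T \<inter> X) \<union> ({1..n} - T)) \<union> (T \<inter> ({1..n} - X))" using T X by auto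
  moreover have "card (((T \<inter> X) \<union> ({1..n} - T)) \<union> (T \<inter> ({1..n} - X)))
     = card (T \<inter> X) + card ({1..n} - T) + card (T \<inter> ({1..n} - X))"
  proof -
    have f: "finite (T \<inter> X)" "finite ({1..n} - T)" "finite (T \<inter> ({1..n} - X))"
      using T by (auto intro: finite_subset)
    have "card ((T \<inter> X) \<union> ({1..n} - T)) = card (T \<inter> X) + card ({1..n} - T)"
      using f by (intro card_Un_disjoint) auto
    moreover have "card (((T \<inter> X) \<union> ({1..n} - T)) \<union> (T \<inter> ({1..n} - X)))
        = card ((T \<inter> X) \<union> ({1..n} - T)) + card (T \<inter> ({1..n} - X))"
      using f by (intro card_Un_disjoint) auto
    ultimately show ?thesis by simp
  qed
  ultimately show ?thesis by simp
qed

lemma det_cards: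
  assumes T: "T \<subseteq> {1..n}" and X: "X \<subseteq> {1..n}" and d: "determined n B t T X"
  shows "lo X \<le> card (T \<inter> X)" "n + 1 - hi X \<le> card (T \<inter> ({1..n} - X))"
proof -
  have h: "lo X \<le> card (T \<inter> X) \<and> card (T \<inter> X) + card ({1..n} - T) < hi X"
    using det_iff[OF T X] d by simp
  then show "lo X \<le> card (T \<inter> X)" by simp
  show "n + 1 - hi X \<le> card (T \<inter> ({1..n} - X))" using h card_partition[OF T X] by linarith
qed

lemma cards_det:
  assumes T: "T \<subseteq> {1..n}" and X: "X \<subseteq> {1..n}"
    and a: "lo X \<le> card (T \<inter> X)" and b: "n + 1 - hi X \<le> card (T \<inter> ({1..n} - X))"
  shows "determined n B t T X"
proof -
  have "hi X \<le> n + 1" "card X < hi X" using lo_hi[OF X] by auto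
  then have "card (T \<inter> X) + card ({1..n} - T) < hi X" using b card_partition[OF T X] by linarith
  then show ?thesis using det_iff[OF T X] a by simp
qed

end


definition PS :: "nat list \<Rightarrow> (nat set \<Rightarrow> nat) \<Rightarrow> nat set \<Rightarrow> nat set" where
  "PS os g Y = {j \<in> set os. card (set (takeWhile (\<lambda>x. x \<noteq> j) os) \<inter> Y) < g Y}"

lemma tw_nth:
  assumes "distinct os" "k < length os"
  shows "takeWhile (\<lambda>x. x \<noteq> os ! k) os = take k os"
  by (rule takeWhile_eq_take_P_nth) (use assms in \<open>auto simp: nth_eq_iff_index_eq\<close>)

lemma PS_nth:
  assumes "distinct os" "k < length os"
  shows "os ! k \<in> PS os g Y \<longleftrightarrow> card (set (take k os) \<inter> Y) < g Y"
  using assms tw_nth[OF assms] unfolding PS_def by auto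

lemma PS_sub: "PS os g Y \<subseteq> set os" unfolding PS_def by auto

lemma PS_closed:
  assumes "distinct os" "i \<le> k" "k < length os" "os ! k \<in> PS os g Y" "finite Y"
  shows "os ! i \<in> PS os g Y"
proof -
  have "card (set (take i os) \<inter> Y) \<le> card (set (take k os) \<inter> Y)"
    using assms set_take_subset_set_take[of i k os] by (intro card_mono) auto
  then show ?thesis using PS_nth[OF assms(1), of i g Y] PS_nth[OF assms(1,3), of g Y] assms by auto
qed

lemma PS_card_aux:
  assumes "distinct os" "k \<le> length os"
  shows "card (set (take k os) \<inter> Y \<inter> PS os g Y) = min (card (set (take k os) \<inter> Y)) (g Y)"
  using assms(2)
proof (induction k)
  case 0 then show ?case by simp
next
  case (Suc k)
  then have k: "k < length os" by simp
  have tk: "set (take (Suc k) os) = insert (os ! k) (set (take k os))"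
    using k by (simp add: take_Suc_conv_app_nth)
  have nin: "os ! k \<notin> set (take k os)"
  proof -
    have "distinct (take (Suc k) os)" using assms(1) by simp
    then show ?thesis using k by (simp add: take_Suc_conv_app_nth)
  qed
  have IH: "card (set (take k os) \<inter> Y \<inter> PS os g Y) = min (card (set (take k os) \<inter> Y)) (g Y)"
    using Suc k by simp
  have mem: "os ! k \<in> PS os g Y \<longleftrightarrow> card (set (take k os) \<inter> Y) < g Y"
    using PS_nth[OF assms(1) k] .
  show ?case
  proof (cases "os ! k \<in> Y")
    case False
    then have "set (take (Suc k) os) \<inter> Y = set (take k os) \<inter> Y" using tk by auto
    then show ?thesis using IH by simp
  next
    case True
    then have e1: "set (take (Suc k) os) \<inter> Y = insert (os!k) (set (take k os) \<inter> Y)" using tk by auto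
    have c1: "card (set (take (Suc k) os) \<inter> Y) = Suc (card (set (take k os) \<inter> Y))"
      unfolding e1 using nin by simp
    show ?thesis
    proof (cases "os ! k \<in> PS os g Y")
      case True
      then have "set (take (Suc k) os) \<inter> Y \<inter> PS os g Y = insert (os!k) (set (take k os) \<inter> Y \<inter> PS os g Y)"
        using e1 by auto
      then have "card (set (take (Suc k) os) \<inter> Y \<inter> PS os g Y) = Suc (card (set (take k os) \<inter> Y \<inter> PS os g Y))"
        using nin by simp
      then show ?thesis using IH c1 mem True by simp
    next
      case False
      then have "set (take (Suc k) os) \<inter> Y \<inter> PS os g Y = set (take k os) \<inter> Y \<inter> PS os g Y"
        using e1 by auto
      then show ?thesis using IH c1 mem False by simp
    qed
  qed
qed

lemma PS_card:
  assumes "distinct os" "Y \<subseteq> set os" "g Y \<le> card Y"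
  shows "card (Y \<inter> PS os g Y) = g Y"
proof -
  have "card (set (take (length os) os) \<inter> Y \<inter> PS os g Y) = min (card (set (take (length os) os) \<inter> Y)) (g Y)"
    using PS_card_aux[OF assms(1), of "length os"] by simp
  moreover have "set (take (length os) os) \<inter> Y = Y" using assms by auto
  moreover have "set os \<inter> (Y \<inter> PS os g Y) = Y \<inter> PS os g Y" using assms(2) by auto
  ultimately show ?thesis using assms(3) by (simp add: Int_assoc min_def)
qed

lemma PS_sorted:
  fixes w :: "nat \<Rightarrow> real"
  assumes "distinct os" "sorted (map w os)" "f \<in> PS os g Y" "h \<in> set os" "h \<notin> PS os g Y" "finite Y"
  shows "w f \<le> w h"
proof -
  obtain i where i: "i < length os" "os ! i = f" using assms PS_sub by (metis in_set_conv_nth subsetD)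
  obtain k where k: "k < length os" "os ! k = h" using assms by (metis in_set_conv_nth)
  have "\<not> k \<le> i" using PS_closed[OF assms(1), of k i g Y] i k assms by auto
  then have "map w os ! i \<le> map w os ! k" using sorted_nth_mono[OF assms(2), of i k] k by simp
  then show ?thesis using i k by simp
qed

lemma PS_mono_mem:
  assumes "j \<notin> Y" "g Y \<le> g (insert j Y)" "j \<in> PS os g Y"
  shows "j \<in> PS os g (insert j Y)"
proof -
  have "set (takeWhile (\<lambda>x. x \<noteq> j) os) \<inter> insert j Y = set (takeWhile (\<lambda>x. x \<noteq> j) os) \<inter> Y"
    by (auto dest: set_takeWhileD)
  then show ?thesis using assms unfolding PS_def by auto
qed

lemma tw_mono:
  assumes "T \<subseteq> T'"
  shows "set (takeWhile (\<lambda>j. j \<in> T) os) \<subseteq> set (takeWhile (\<lambda>j. j \<in> T') os)"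
  using assms by (induction os) auto

lemma first_untested:
  assumes "\<not> set os \<subseteq> T"
  defines "P \<equiv> takeWhile (\<lambda>j. j \<in> T) os"
  defines "j \<equiv> hd (filter (\<lambda>j. j \<notin> T) os)"
  shows "length P < length os" "os ! length P = j" "j \<notin> T" "j \<in> set os" "set P \<subseteq> T"
    "\<And>i. i < length P \<Longrightarrow> os ! i \<in> T"
proof -
  define D where "D = dropWhile (\<lambda>j. j \<in> T) os"
  have os: "os = P @ D" unfolding P_def D_def by simp
  have "D \<noteq> []"
  proof
    assume "D = []"
    then have "set os \<subseteq> T" using os unfolding P_def by (metis append_Nil2 set_takeWhileD subsetI)
    then show False using assms(1) by simp
  qed
  then obtain d D' where D: "D = d # D'" by (cases D) auto
  have dT: "d \<notin> T" using hd_dropWhile[of "\<lambda>j. j \<in> T" os] D unfolding D_def by auto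
  have PT: "set P \<subseteq> T" unfolding P_def by (auto dest: set_takeWhileD)
  have "filter (\<lambda>j. j \<notin> T) os = d # filter (\<lambda>j. j \<notin> T) D'"
    using os D dT PT by (auto simp: filter_empty_conv)
  then have jd: "j = d" unfolding j_def by simp
  show "length P < length os" using os D by simp
  show "os ! length P = j" using os D jd by (simp add: nth_append)
  show "j \<notin> T" using dT jd by simp
  show "j \<in> set os" using os D jd by simp
  show "set P \<subseteq> T" by (rule PT)
  show "\<And>i. i < length P \<Longrightarrow> os ! i \<in> T" using PT os by (metis nth_append nth_mem subsetD)
qed

lemma first_untested_PS:
  assumes "distinct os" "y \<in> PS os g Y" "y \<notin> T" "finite Y"
  defines "P \<equiv> takeWhile (\<lambda>j. j \<in> T) os"
  defines "j \<equiv> hd (filter (\<lambda>j. j \<notin> T) os)"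
  shows "insert j (set P) \<subseteq> PS os g Y"
proof -
  have yo: "y \<in> set os" using PS_sub[of os g Y] assms(2) by blast
  then have ns: "\<not> set os \<subseteq> T" using assms(3) by blast
  note fu = first_untested[OF ns, folded P_def j_def]
  obtain k where k: "k < length os" "os ! k = y" using yo by (auto simp: in_set_conv_nth)
  have km: "length P \<le> k"
  proof (rule ccontr)
    assume "\<not> length P \<le> k"
    then have "os ! k \<in> T" using fu(6) by simp
    then show False using k assms by simp
  qed
  have cl: "os ! i \<in> PS os g Y" if "i \<le> length P" for i
  proof -
    have "i \<le> k" using that km by linarith
    then show ?thesis using PS_closed[OF assms(1) _ k(1), of i g Y] k(2) assms(2,4) by simp
  qed
  have Pt: "P = take (length P) os" unfolding P_def by (rule takeWhile_eq_take)
  have sP: "set P = set (take (length P) os)" using Pt by (rule arg_cong)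
  have "x \<in> PS os g Y" if "x \<in> set P" for x
  proof -
    have "x \<in> set (take (length P) os)" using that sP by blast
    then obtain i where i: "i < length (take (length P) os)" "take (length P) os ! i = x"
      unfolding in_set_conv_nth by blast
    have il: "i < length P" using i(1) by simp
    have "os ! i = x" using i il by simp
    then show ?thesis using cl[of i] il by simp
  qed
  moreover have "j \<in> PS os g Y" using cl[of "length P"] fu(2) by simp
  ultimately show ?thesis by blast
qed

lemma first_untested_tw:
  assumes "\<not> set os \<subseteq> T"
  defines "P \<equiv> takeWhile (\<lambda>j. j \<in> T) os"
  defines "j \<equiv> hd (filter (\<lambda>j. j \<notin> T) os)"
  shows "insert j (set P) \<subseteq> set (takeWhile (\<lambda>x. x \<in> insert j T) os)"
proof -
  note fu = first_untested[OF assms(1), folded P_def j_def]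
  define D where "D = dropWhile (\<lambda>j. j \<in> T) os"
  have os: "os = P @ D" unfolding P_def D_def by simp
  have D: "D = j # tl D" using fu(1,2) os
    by (metis append_eq_conv_conj hd_drop_conv_nth list.collapse drop_eq_Nil2 not_le)
  have os2: "os = P @ j # tl D" using os D by simp
  have "takeWhile (\<lambda>x. x \<in> insert j T) (P @ j # tl D) = P @ j # takeWhile (\<lambda>x. x \<in> insert j T) (tl D)"
    using fu(5) by (subst takeWhile_append2) auto
  then have "takeWhile (\<lambda>x. x \<in> insert j T) os = P @ j # takeWhile (\<lambda>x. x \<in> insert j T) (tl D)"
    using os2 by simp
  then show ?thesis by auto
qed



lemma prob_nonneg:
  assumes "Y \<subseteq> {1..n}" "\<forall>j\<in>{1..n}. 0 < q j \<and> q j < 1"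
  shows "prob n q Y \<ge> 0"
proof -
  have "(\<Prod>j\<in>Y. q j) \<ge> 0" using assms by (intro prod_nonneg) (auto simp: less_imp_le)
  moreover have "(\<Prod>j\<in>{1..n} - Y. 1 - q j) \<ge> 0" using assms by (intro prod_nonneg) (auto simp: less_imp_le)
  ultimately show ?thesis unfolding prob_def by simp
qed

lemma prob_insert:
  assumes "Y \<subseteq> {1..n}" "j \<in> {1..n}" "j \<notin> Y"
  shows "prob n q (insert j Y) * (1 - q j) = prob n q Y * q j"
proof -
  have fY: "finite Y" using assms(1) finite_subset by blast
  have e: "{1..n} - Y = insert j ({1..n} - insert j Y)" using assms by auto
  have p1: "(\<Prod>i\<in>insert j Y. q i) = q j * (\<Prod>i\<in>Y. q i)" using fY assms by simp
  have p2: "(\<Prod>i\<in>{1..n} - Y. 1 - q i) = (1 - q j) * (\<Prod>i\<in>{1..n} - insert j Y. 1 - q i)"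
    unfolding e by (subst prod.insert) auto
  show ?thesis unfolding prob_def p1 p2 by (simp add: algebra_simps)
qed

lemma sum_Pow_split:
  fixes f :: "nat set \<Rightarrow> real"
  assumes "j \<in> N" "finite N"
  shows "(\<Sum>Y\<in>Pow N. f Y) = (\<Sum>Y\<in>Pow (N - {j}). f Y + f (insert j Y))"
proof -
  have N: "N = insert j (N - {j})" using assms by auto
  have "(\<Sum>Y\<in>Pow N. f Y) = (\<Sum>Y\<in>Pow (N - {j}) \<union> insert j ` Pow (N - {j}). f Y)"
    by (subst N) (simp only: Pow_insert)
  also have "\<dots> = (\<Sum>Y\<in>Pow (N - {j}). f Y) + (\<Sum>Y\<in>insert j ` Pow (N - {j}). f Y)"
    by (rule sum.union_disjoint) (use assms in auto)
  also have "(\<Sum>Y\<in>insert j ` Pow (N - {j}). f Y) = (\<Sum>Y\<in>Pow (N - {j}). f (insert j Y))"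
    by (subst sum.reindex) (auto intro!: inj_onI simp: o_def)
  finally show ?thesis by (simp add: sum.distrib)
qed

lemma term_le:
  fixes P0 P1 q c :: real
  assumes "a \<longrightarrow> b" "P0 * q = P1 * (1 - q)" "0 < q" "q < 1" "c \<ge> 0" "P0 \<ge> 0" "P1 \<ge> 0"
  shows "P0 * (if a then c else 0) + P1 * (if b then c else 0) \<le> P1 * (if b then c / q else 0)"
    and "a = b \<Longrightarrow> P0 * (if a then c else 0) + P1 * (if b then c else 0) = P1 * (if b then c / q else 0)"
proof -
  have key: "P0 * c + P1 * c = P1 * (c / q)"
  proof -
    have e: "P0 * q + P1 * q = P1" using assms(2) by (simp add: algebra_simps)
    have "(P0 * c + P1 * c) * q = c * (P0 * q + P1 * q)" by (simp add: algebra_simps)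
    also have "\<dots> = c * P1" using e by simp
    also have "\<dots> = P1 * (c / q) * q" using assms(3) by simp
    finally have "(P0 * c + P1 * c) * q = P1 * (c / q) * q" .
    then show ?thesis using assms(3) by (simp add: field_simps)
  qed
  have "c * q \<le> c * 1" using assms by (intro mult_left_mono) auto
  then have "c \<le> c / q" using assms(3) by (simp add: field_simps)
  then have k2: "P1 * c \<le> P1 * (c / q)"
    using assms by (intro mult_left_mono) auto
  have k3: "0 \<le> P0 * c" using assms by simp
  show "P0 * (if a then c else 0) + P1 * (if b then c else 0) \<le> P1 * (if b then c / q else 0)"
    using assms(1) key k2 k3 by auto
  show "a = b \<Longrightarrow> P0 * (if a then c else 0) + P1 * (if b then c else 0) = P1 * (if b then c / q else 0)"
    using key by auto
qed

lemma sum_restrict_N: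
  fixes c :: "nat \<Rightarrow> real"
  assumes "A \<subseteq> N" "finite N"
  shows "sum c A = (\<Sum>j\<in>N. if j \<in> A then c j else 0)"
proof -
  have "A \<inter> N = A" using assms by auto
  then show ?thesis using assms by (simp add: sum.inter_restrict[symmetric] Int_commute)
qed

lemma swap_gen:
  fixes c q :: "nat \<Rightarrow> real" and M :: "nat set \<Rightarrow> nat set"
  assumes q: "\<forall>j\<in>{1..n}. 0 < q j \<and> q j < 1"
    and c: "\<forall>j\<in>{1..n}. c j \<ge> 0"
    and M: "\<And>Y. Y \<subseteq> {1..n} \<Longrightarrow> M Y \<subseteq> {1..n}"
    and mono: "\<And>Y j. Y \<subseteq> {1..n} \<Longrightarrow> j \<in> {1..n} \<Longrightarrow> j \<notin> Y \<Longrightarrow> j \<in> M Y \<Longrightarrow> j \<in> M (insert j Y)"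
  shows "(\<Sum>Y\<in>Pow {1..n}. prob n q Y * sum c (M Y))
           \<le> (\<Sum>Y\<in>Pow {1..n}. prob n q Y * (\<Sum>j\<in>M Y \<inter> Y. c j / q j))"
    and "(\<And>Y j. Y \<subseteq> {1..n} \<Longrightarrow> j \<in> {1..n} \<Longrightarrow> j \<notin> Y \<Longrightarrow> j \<in> M (insert j Y) \<Longrightarrow> j \<in> M Y) \<Longrightarrow>
         (\<Sum>Y\<in>Pow {1..n}. prob n q Y * sum c (M Y))
           = (\<Sum>Y\<in>Pow {1..n}. prob n q Y * (\<Sum>j\<in>M Y \<inter> Y. c j / q j))"
proof -
  let ?N = "{1..n}"
  define A where "A j = (\<Sum>Y\<in>Pow ?N. prob n q Y * (if j \<in> M Y then c j else 0))" for j
  define R where "R j = (\<Sum>Y\<in>Pow ?N. prob n q Y * (if j \<in> M Y \<and> j \<in> Y then c j / q j else 0))" for j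
  have L: "(\<Sum>Y\<in>Pow ?N. prob n q Y * sum c (M Y)) = (\<Sum>j\<in>?N. A j)"
  proof -
    have "(\<Sum>Y\<in>Pow ?N. prob n q Y * sum c (M Y))
        = (\<Sum>Y\<in>Pow ?N. \<Sum>j\<in>?N. prob n q Y * (if j \<in> M Y then c j else 0))"
    proof (rule sum.cong[OF refl])
      fix Y assume "Y \<in> Pow ?N"
      then have "sum c (M Y) = (\<Sum>j\<in>?N. if j \<in> M Y then c j else 0)"
        using M by (intro sum_restrict_N) auto
      then show "prob n q Y * sum c (M Y) = (\<Sum>j\<in>?N. prob n q Y * (if j \<in> M Y then c j else 0))"
        by (simp add: sum_distrib_left)
    qed
    also have "\<dots> = (\<Sum>j\<in>?N. A j)" unfolding A_def by (rule sum.swap)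
    finally show ?thesis .
  qed
  have Rr: "(\<Sum>Y\<in>Pow ?N. prob n q Y * (\<Sum>j\<in>M Y \<inter> Y. c j / q j)) = (\<Sum>j\<in>?N. R j)"
  proof -
    have "(\<Sum>Y\<in>Pow ?N. prob n q Y * (\<Sum>j\<in>M Y \<inter> Y. c j / q j))
        = (\<Sum>Y\<in>Pow ?N. \<Sum>j\<in>?N. prob n q Y * (if j \<in> M Y \<and> j \<in> Y then c j / q j else 0))"
    proof (rule sum.cong[OF refl])
      fix Y assume "Y \<in> Pow ?N"
      then have "(\<Sum>j\<in>M Y \<inter> Y. c j / q j) = (\<Sum>j\<in>?N. if j \<in> M Y \<inter> Y then c j / q j else 0)"
        using M by (intro sum_restrict_N) auto
      then show "prob n q Y * (\<Sum>j\<in>M Y \<inter> Y. c j / q j) = (\<Sum>j\<in>?N. prob n q Y * (if j \<in> M Y \<and> j \<in> Y then c j / q j else 0))"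
        by (simp add: sum_distrib_left)
    qed
    also have "\<dots> = (\<Sum>j\<in>?N. R j)" unfolding R_def by (rule sum.swap)
    finally show ?thesis .
  qed
  have split: "A j = (\<Sum>Y\<in>Pow (?N - {j}). prob n q Y * (if j \<in> M Y then c j else 0)
                     + prob n q (insert j Y) * (if j \<in> M (insert j Y) then c j else 0))"
    "R j = (\<Sum>Y\<in>Pow (?N - {j}). prob n q (insert j Y) * (if j \<in> M (insert j Y) then c j / q j else 0))"
    if "j \<in> ?N" for j
  proof -
    show "A j = (\<Sum>Y\<in>Pow (?N - {j}). prob n q Y * (if j \<in> M Y then c j else 0)
                     + prob n q (insert j Y) * (if j \<in> M (insert j Y) then c j else 0))"
      unfolding A_def by (rule sum_Pow_split) (use that in auto)
    have "R j = (\<Sum>Y\<in>Pow (?N - {j}). prob n q Y * (if j \<in> M Y \<and> j \<in> Y then c j / q j else 0)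
         + prob n q (insert j Y) * (if j \<in> M (insert j Y) \<and> j \<in> insert j Y then c j / q j else 0))"
      unfolding R_def by (rule sum_Pow_split) (use that in auto)
    also have "\<dots> = (\<Sum>Y\<in>Pow (?N - {j}). prob n q (insert j Y) * (if j \<in> M (insert j Y) then c j / q j else 0))"
      by (rule sum.cong) auto
    finally show "R j = (\<Sum>Y\<in>Pow (?N - {j}). prob n q (insert j Y) * (if j \<in> M (insert j Y) then c j / q j else 0))" .
  qed
  have facts: "prob n q Y * q j = prob n q (insert j Y) * (1 - q j)" "0 < q j" "q j < 1" "c j \<ge> 0"
    "prob n q Y \<ge> 0" "prob n q (insert j Y) \<ge> 0"
    if "j \<in> ?N" "Y \<in> Pow (?N - {j})" for j Y
  proof -
    have "Y \<subseteq> {1..n}" "j \<in> {1..n}" "j \<notin> Y" using that by auto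
    from prob_insert[OF this] show "prob n q Y * q j = prob n q (insert j Y) * (1 - q j)" by simp
    show "0 < q j" "q j < 1" "c j \<ge> 0" using q c that by auto
    have "Y \<subseteq> {1..n}" "insert j Y \<subseteq> {1..n}" using that by auto
    then show "prob n q Y \<ge> 0" "prob n q (insert j Y) \<ge> 0" using prob_nonneg q by auto
  qed
  have "A j \<le> R j" if j: "j \<in> ?N" for j
    unfolding split[OF j]
  proof (rule sum_mono)
    fix Y assume Y: "Y \<in> Pow (?N - {j})"
    show "prob n q Y * (if j \<in> M Y then c j else 0) + prob n q (insert j Y) * (if j \<in> M (insert j Y) then c j else 0)
          \<le> prob n q (insert j Y) * (if j \<in> M (insert j Y) then c j / q j else 0)"
      by (rule term_le(1)) (use facts[OF j Y] mono[of Y j] Y j in auto)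
  qed
  then show "(\<Sum>Y\<in>Pow {1..n}. prob n q Y * sum c (M Y))
           \<le> (\<Sum>Y\<in>Pow {1..n}. prob n q Y * (\<Sum>j\<in>M Y \<inter> Y. c j / q j))"
    unfolding L Rr by (rule sum_mono)
  assume mono2: "\<And>Y j. Y \<subseteq> {1..n} \<Longrightarrow> j \<in> {1..n} \<Longrightarrow> j \<notin> Y \<Longrightarrow> j \<in> M (insert j Y) \<Longrightarrow> j \<in> M Y"
  have "A j = R j" if j: "j \<in> ?N" for j
    unfolding split[OF j]
  proof (rule sum.cong[OF refl])
    fix Y assume Y: "Y \<in> Pow (?N - {j})"
    show "prob n q Y * (if j \<in> M Y then c j else 0) + prob n q (insert j Y) * (if j \<in> M (insert j Y) then c j else 0)
          = prob n q (insert j Y) * (if j \<in> M (insert j Y) then c j / q j else 0)"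
      by (rule term_le(2)) (use facts[OF j Y] mono[of Y j] mono2[of Y j] Y j in auto)
  qed
  then show "(\<Sum>Y\<in>Pow {1..n}. prob n q Y * sum c (M Y))
           = (\<Sum>Y\<in>Pow {1..n}. prob n q Y * (\<Sum>j\<in>M Y \<inter> Y. c j / q j))"
    unfolding L Rr by (rule sum.cong[OF refl])
qed



lemma det_indep:
  assumes "X \<subseteq> {1..n}" "X' \<subseteq> {1..n}" "X \<inter> T = X' \<inter> T" "determined n B t T X"
  shows "determined n B t T X'"
  unfolding determined_def
proof (intro allI impI)
  fix Z assume Z: "Z \<subseteq> {1..n}" "Z \<inter> T = X' \<inter> T"
  have "score B t (card Z) = score B t (card X)" using assms(4) Z assms(3) unfolding determined_def by simp
  moreover have "score B t (card X') = score B t (card X)" using assms(4) assms(2,3) unfolding determined_def by simp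
  ultimately show "score B t (card Z) = score B t (card X')" by simp
qed

lemma strat_run_prefix: "\<exists>h'. strat_run n B t \<sigma> X k h = h @ h'"
proof (induction k arbitrary: h)
  case 0 then show ?case by simp
next
  case (Suc k)
  show ?case
  proof (cases "determined n B t (set (map fst h)) X")
    case True then show ?thesis by simp
  next
    case False
    obtain h' where "strat_run n B t \<sigma> X k (h @ [(\<sigma> h, \<sigma> h \<in> X)]) = (h @ [(\<sigma> h, \<sigma> h \<in> X)]) @ h'"
      using Suc by blast
    then show ?thesis using False by simp
  qed
qed

lemma strat_run_inv:
  assumes valid: "valid_strategy n \<sigma>" and X: "X \<subseteq> {1..n}"
  shows "distinct (map fst h) \<Longrightarrow> set (map fst h) \<subseteq> {1..n} \<Longrightarrow> length h + k = n \<Longrightarrow>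
    distinct (map fst (strat_run n B t \<sigma> X k h)) \<and> set (map fst (strat_run n B t \<sigma> X k h)) \<subseteq> {1..n}
    \<and> determined n B t (set (map fst (strat_run n B t \<sigma> X k h))) X"
proof (induction k arbitrary: h)
  case 0
  have "card (set (map fst h)) = n" using 0 distinct_card[OF 0(1)] by simp
  then have "set (map fst h) = {1..n}" using 0(2) by (intro card_subset_eq) auto
  moreover have "determined n B t {1..n} X" unfolding determined_def
  proof (intro allI impI)
    fix X' assume "X' \<subseteq> {1..n}" "X' \<inter> {1..n} = X \<inter> {1..n}"
    then have "X' = X" using X by auto
    then show "score B t (card X') = score B t (card X)" by simp
  qed
  ultimately show ?case using 0 by simp
next
  case (Suc k)
  show ?case
  proof (cases "determined n B t (set (map fst h)) X")
    case True then show ?thesis using Suc by simp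
  next
    case False
    have "\<sigma> h \<in> {1..n} - set (map fst h)" using valid Suc.prems unfolding valid_strategy_def by auto
    then have "distinct (map fst (h @ [(\<sigma> h, \<sigma> h \<in> X)])) \<and> set (map fst (h @ [(\<sigma> h, \<sigma> h \<in> X)])) \<subseteq> {1..n}
       \<and> length (h @ [(\<sigma> h, \<sigma> h \<in> X)]) + k = n" using Suc.prems by auto
    then show ?thesis using Suc.IH False by simp
  qed
qed

lemma strat_run_indep:
  assumes X: "X \<subseteq> {1..n}" and X': "X' \<subseteq> {1..n}" and XX': "X - {j} = X' - {j}"
  shows "j \<notin> set (map fst h) \<Longrightarrow>
    (j \<in> set (map fst (strat_run n B t \<sigma> X k h)) \<longleftrightarrow> j \<in> set (map fst (strat_run n B t \<sigma> X' k h)))"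
proof (induction k arbitrary: h)
  case 0 then show ?case by simp
next
  case (Suc k)
  have eq: "X \<inter> set (map fst h) = X' \<inter> set (map fst h)" using XX' Suc.prems by blast
  have dd: "determined n B t (set (map fst h)) X = determined n B t (set (map fst h)) X'"
    using det_indep[OF X X' eq] det_indep[OF X' X eq[symmetric]] by blast
  show ?case
  proof (cases "determined n B t (set (map fst h)) X")
    case True then show ?thesis using dd by simp
  next
    case False
    then have F': "\<not> determined n B t (set (map fst h)) X'" using dd by simp
    show ?thesis
    proof (cases "\<sigma> h = j")
      case True
      obtain h1 where "strat_run n B t \<sigma> X k (h @ [(\<sigma> h, \<sigma> h \<in> X)]) = (h @ [(\<sigma> h, \<sigma> h \<in> X)]) @ h1"
        using strat_run_prefix by blast
      moreover obtain h2 where "strat_run n B t \<sigma> X' k (h @ [(\<sigma> h, \<sigma> h \<in> X')]) = (h @ [(\<sigma> h, \<sigma> h \<in> X')]) @ h2"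
        using strat_run_prefix by blast
      ultimately show ?thesis using False F' True by simp
    next
      case False2: False
      then have "(\<sigma> h \<in> X) = (\<sigma> h \<in> X')" using XX' by blast
      then show ?thesis using False F' Suc.IH[of "h @ [(\<sigma> h, \<sigma> h \<in> X)]"] Suc.prems False2 by simp
    qed
  qed
qed



lemma cost_snoc: "cost c (h @ [(j, b)]) = cost c h + c j"
  unfolding cost_def by simp

lemma sum_sub_mono:
  fixes c :: "nat \<Rightarrow> real"
  assumes "A \<subseteq> B" "B \<subseteq> {1..n}" "\<forall>j\<in>{1..n}. c j \<ge> 0"
  shows "sum c A \<le> sum c B"
  using assms by (intro sum_mono2) (auto intro: finite_subset)

lemma step_bound:
  fixes c :: "nat \<Rightarrow> real"
  assumes os: "set os = {1..n}" and c: "\<forall>j\<in>{1..n}. c j \<ge> 0"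
    and S: "S \<subseteq> {1..n}"
    and closed: "insert (hd (filter (\<lambda>j. j \<notin> T) os)) (set (takeWhile (\<lambda>j. j \<in> T) os)) \<subseteq> S"
    and C: "C \<le> sum c (set (takeWhile (\<lambda>j. j \<in> T) os))"
    and ns: "\<not> set os \<subseteq> T"
  shows "C + c (hd (filter (\<lambda>j. j \<notin> T) os)) \<le> sum c S"
proof -
  let ?j = "hd (filter (\<lambda>j. j \<notin> T) os)" and ?P = "set (takeWhile (\<lambda>j. j \<in> T) os)"
  note fu = first_untested[OF ns]
  have "?j \<notin> ?P" using fu(3,5) by blast
  then have "sum c (insert ?j ?P) = c ?j + sum c ?P" by simp
  moreover have "sum c (insert ?j ?P) \<le> sum c S" using sum_sub_mono[OF closed S c] .
  ultimately show ?thesis using C by simp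
qed

lemma step_tw:
  fixes c :: "nat \<Rightarrow> real"
  assumes os: "set os = {1..n}" and c: "\<forall>j\<in>{1..n}. c j \<ge> 0"
    and C: "C \<le> sum c (set (takeWhile (\<lambda>j. j \<in> T) os))"
    and ns: "\<not> set os \<subseteq> T"
  shows "C + c (hd (filter (\<lambda>j. j \<notin> T) os))
      \<le> sum c (set (takeWhile (\<lambda>x. x \<in> insert (hd (filter (\<lambda>j. j \<notin> T) os)) T) os))"
proof -
  let ?j = "hd (filter (\<lambda>j. j \<notin> T) os)" and ?P = "set (takeWhile (\<lambda>j. j \<in> T) os)"
  note fu = first_untested[OF ns]
  have "?j \<notin> ?P" using fu(3,5) by blast
  then have "sum c (insert ?j ?P) = c ?j + sum c ?P" by simp
  moreover have "sum c (insert ?j ?P) \<le> sum c (set (takeWhile (\<lambda>x. x \<in> insert ?j T) os))"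
    using first_untested_tw[OF ns] os c by (intro sum_sub_mono[of _ _ n]) (auto dest: set_takeWhileD)
  ultimately show ?thesis using C by simp
qed

lemma tw_sum_mono:
  fixes c :: "nat \<Rightarrow> real"
  assumes os: "set os = {1..n}" and c: "\<forall>j\<in>{1..n}. c j \<ge> 0" and "T \<subseteq> T'"
  shows "sum c (set (takeWhile (\<lambda>j. j \<in> T) os)) \<le> sum c (set (takeWhile (\<lambda>j. j \<in> T') os))"
  using tw_mono[OF assms(3), of os] os c by (intro sum_sub_mono[of _ _ n]) (auto dest: set_takeWhileD)

lemma rr_bound:
  fixes c :: "nat \<Rightarrow> real"
  assumes o1: "set o1 = {1..n}" and o2: "set o2 = {1..n}"
    and c: "\<forall>j\<in>{1..n}. c j \<ge> 0"
    and S1: "S1 \<subseteq> {1..n}" and S2: "S2 \<subseteq> {1..n}"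
    and cl1: "\<And>T y. y \<in> S1 \<Longrightarrow> y \<notin> T \<Longrightarrow>
        insert (hd (filter (\<lambda>j. j \<notin> T) o1)) (set (takeWhile (\<lambda>j. j \<in> T) o1)) \<subseteq> S1"
    and cl2: "\<And>T y. y \<in> S2 \<Longrightarrow> y \<notin> T \<Longrightarrow>
        insert (hd (filter (\<lambda>j. j \<notin> T) o2)) (set (takeWhile (\<lambda>j. j \<in> T) o2)) \<subseteq> S2"
    and suff: "\<And>T. T \<subseteq> {1..n} \<Longrightarrow> S1 \<subseteq> T \<Longrightarrow> S2 \<subseteq> T \<Longrightarrow> determined n B t T X"
    and detN: "determined n B t {1..n} X"
  defines "K \<equiv> sum c S1 + sum c S2"
  shows "set (map fst h) \<subseteq> {1..n} \<Longrightarrow> cost c h = C1 + C2 \<Longrightarrow> C1 \<le> K \<Longrightarrow> C2 \<le> K \<Longrightarrow>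
    C1 \<le> sum c (set (takeWhile (\<lambda>j. j \<in> set (map fst h)) o1)) \<Longrightarrow>
    C2 \<le> sum c (set (takeWhile (\<lambda>j. j \<in> set (map fst h)) o2)) \<Longrightarrow>
    cost c (rr_run n B t c o1 o2 tb X k C1 C2 h) \<le> 2 * K"
proof (induction k arbitrary: C1 C2 h)
  case 0 then show ?case by simp
next
  case (Suc k)
  let ?T = "set (map fst h)"
  show ?case
  proof (cases "determined n B t ?T X")
    case True then show ?thesis using Suc.prems by simp
  next
    case False
    have TN: "?T \<noteq> {1..n}" using False detN by auto
    then have ns1: "\<not> set o1 \<subseteq> ?T" and ns2: "\<not> set o2 \<subseteq> ?T" using Suc.prems(1) o1 o2 by auto
    define j1 where "j1 = hd (filter (\<lambda>j. j \<notin> ?T) o1)"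
    define j2 where "j2 = hd (filter (\<lambda>j. j \<notin> ?T) o2)"
    have j1N: "j1 \<in> {1..n}" using first_untested(4)[OF ns1] o1 unfolding j1_def by simp
    have j2N: "j2 \<in> {1..n}" using first_untested(4)[OF ns2] o2 unfolding j2_def by simp
    have s1: "sum c S1 \<ge> 0" using c S1 by (intro sum_nonneg) auto
    have s2: "sum c S2 \<ge> 0" using c S2 by (intro sum_nonneg) auto
    have either: "(\<exists>y. y \<in> S1 \<and> y \<notin> ?T) \<or> (\<exists>y. y \<in> S2 \<and> y \<notin> ?T)"
      using suff[OF Suc.prems(1)] False by blast
    have b1: "C1 + c j1 \<le> sum c S1" if "y \<in> S1" "y \<notin> ?T" for y
      unfolding j1_def by (rule step_bound[OF o1 c S1 cl1[OF that] Suc.prems(5) ns1])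
    have b2: "C2 + c j2 \<le> sum c S2" if "y \<in> S2" "y \<notin> ?T" for y
      unfolding j2_def by (rule step_bound[OF o2 c S2 cl2[OF that] Suc.prems(6) ns2])
    have tw1: "C1 + c j1 \<le> sum c (set (takeWhile (\<lambda>x. x \<in> insert j1 ?T) o1))"
      unfolding j1_def by (rule step_tw[OF o1 c Suc.prems(5) ns1])
    have tw2: "C2 + c j2 \<le> sum c (set (takeWhile (\<lambda>x. x \<in> insert j2 ?T) o2))"
      unfolding j2_def by (rule step_tw[OF o2 c Suc.prems(6) ns2])
    have m12: "sum c (set (takeWhile (\<lambda>x. x \<in> ?T) o2)) \<le> sum c (set (takeWhile (\<lambda>x. x \<in> insert j1 ?T) o2))"
      by (rule tw_sum_mono[OF o2 c]) auto
    have m21: "sum c (set (takeWhile (\<lambda>x. x \<in> ?T) o1)) \<le> sum c (set (takeWhile (\<lambda>x. x \<in> insert j2 ?T) o1))"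
      by (rule tw_sum_mono[OF o1 c]) auto
    have unf: "rr_run n B t c o1 o2 tb X (Suc k) C1 C2 h =
      (if C1 + c j1 < C2 + c j2 \<or> (C1 + c j1 = C2 + c j2 \<and> tb h)
       then rr_run n B t c o1 o2 tb X k (C1 + c j1) C2 (h @ [(j1, j1 \<in> X)])
       else rr_run n B t c o1 o2 tb X k C1 (C2 + c j2) (h @ [(j2, j2 \<in> X)]))"
      using False unfolding j1_def j2_def by (simp add: Let_def)
    show ?thesis
    proof (cases "C1 + c j1 < C2 + c j2 \<or> (C1 + c j1 = C2 + c j2 \<and> tb h)")
      case True
      then have le: "C1 + c j1 \<le> C2 + c j2" by auto
      have v: "C1 + c j1 \<le> K"
      proof (cases "\<exists>y. y \<in> S1 \<and> y \<notin> ?T")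
        case True then obtain y where "y \<in> S1" "y \<notin> ?T" by blast
        from b1[OF this] s2 show ?thesis unfolding K_def by linarith
      next
        case False then obtain y where "y \<in> S2" "y \<notin> ?T" using either by blast
        from b2[OF this] s1 le show ?thesis unfolding K_def by linarith
      qed
      have "cost c (rr_run n B t c o1 o2 tb X k (C1 + c j1) C2 (h @ [(j1, j1 \<in> X)])) \<le> 2 * K"
      proof (rule Suc.IH)
        show "set (map fst (h @ [(j1, j1 \<in> X)])) \<subseteq> {1..n}" using Suc.prems(1) j1N by simp
        show "cost c (h @ [(j1, j1 \<in> X)]) = C1 + c j1 + C2" using Suc.prems(2) by (simp add: cost_snoc)
        show "C1 + c j1 \<le> K" by (rule v)
        show "C2 \<le> K" by (rule Suc.prems(4))
        show "C1 + c j1 \<le> sum c (set (takeWhile (\<lambda>j. j \<in> set (map fst (h @ [(j1, j1 \<in> X)]))) o1))"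
          using tw1 by simp
        show "C2 \<le> sum c (set (takeWhile (\<lambda>j. j \<in> set (map fst (h @ [(j1, j1 \<in> X)]))) o2))"
          using Suc.prems(6) m12 by simp
      qed
      then show ?thesis using unf True by simp
    next
      case False
      then have le: "C2 + c j2 \<le> C1 + c j1" by auto
      have v: "C2 + c j2 \<le> K"
      proof (cases "\<exists>y. y \<in> S2 \<and> y \<notin> ?T")
        case True then obtain y where "y \<in> S2" "y \<notin> ?T" by blast
        from b2[OF this] s1 show ?thesis unfolding K_def by linarith
      next
        case False then obtain y where "y \<in> S1" "y \<notin> ?T" using either by blast
        from b1[OF this] s2 le show ?thesis unfolding K_def by linarith
      qed
      have "cost c (rr_run n B t c o1 o2 tb X k C1 (C2 + c j2) (h @ [(j2, j2 \<in> X)])) \<le> 2 * K"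
      proof (rule Suc.IH)
        show "set (map fst (h @ [(j2, j2 \<in> X)])) \<subseteq> {1..n}" using Suc.prems(1) j2N by simp
        show "cost c (h @ [(j2, j2 \<in> X)]) = C1 + (C2 + c j2)" using Suc.prems(2) by (simp add: cost_snoc)
        show "C1 \<le> K" by (rule Suc.prems(3))
        show "C2 + c j2 \<le> K" by (rule v)
        show "C1 \<le> sum c (set (takeWhile (\<lambda>j. j \<in> set (map fst (h @ [(j2, j2 \<in> X)]))) o1))"
          using Suc.prems(5) m21 by simp
        show "C2 + c j2 \<le> sum c (set (takeWhile (\<lambda>j. j \<in> set (map fst (h @ [(j2, j2 \<in> X)]))) o2))"
          using tw2 by simp
      qed
      then show ?thesis using unf False by simp
    qed
  qed
qed



lemma W_lemma:
  fixes w :: "nat \<Rightarrow> real"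
  assumes os: "distinct os" "set os = {1..n}" and srt: "sorted (map w os)"
    and w: "\<forall>j\<in>{1..n}. w j \<ge> 0"
    and Y: "Y \<subseteq> {1..n}" and A: "A \<subseteq> Y" and gY: "g Y \<le> card Y" and gA: "g Y \<le> card A"
  shows "(\<Sum>j\<in>PS os g Y \<inter> Y. w j) \<le> (\<Sum>j\<in>A. w j)"
proof -
  define L where "L = PS os g Y \<inter> Y"
  have fY: "finite Y" using Y finite_subset by blast
  have fL: "finite L" "finite A" using fY A unfolding L_def by (auto intro: finite_subset)
  have cL: "card L = g Y" unfolding L_def using PS_card[OF os(1), of Y g] Y os(2) gY
    by (simp add: Int_commute)
  have s1: "sum w L = sum w (L \<inter> A) + sum w (L - A)" using fL by (metis sum.Int_Diff)
  have s2: "sum w A = sum w (L \<inter> A) + sum w (A - L)" using fL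
    by (metis Int_commute sum.Int_Diff)
  have cLA: "card (L - A) = card L - card (L \<inter> A)" using fL by (simp add: card_Diff_subset_Int Int_commute)
  have cAL: "card (A - L) = card A - card (L \<inter> A)" using fL
    by (metis Int_commute card_Diff_subset_Int finite_Int)
  have cc: "card (L - A) \<le> card (A - L)" using cLA cAL cL gA by linarith
  have "sum w (L - A) \<le> sum w (A - L)"
  proof (cases "L - A = {}")
    case True
    have "0 \<le> sum w (A - L)" using w A Y by (intro sum_nonneg) auto
    have "sum w (L - A) = 0" using True by (metis sum.empty)
    then show ?thesis using \<open>0 \<le> sum w (A - L)\<close> by simp
  next
    case False
    then have "card (L - A) > 0" using fL by auto
    then have "card (A - L) > 0" using cc by linarith
    then have ne: "A - L \<noteq> {}" by (metis card.empty less_irrefl)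
    define th where "th = Min (w ` (A - L))"
    have fin: "finite (w ` (A - L))" using fL by simp
    have th_le: "th \<le> w h" if "h \<in> A - L" for h unfolding th_def using fin that by simp
    have th_in: "th \<in> w ` (A - L)" unfolding th_def using fin ne by simp
    then have th0: "th \<ge> 0" using w A Y by auto
    have le_th: "w f \<le> th" if "f \<in> L - A" for f
    proof -
      obtain h where h: "h \<in> A - L" "th = w h" using th_in by auto
      have "h \<in> set os" "h \<notin> PS os g Y" using h A Y os(2) unfolding L_def by auto
      moreover have "f \<in> PS os g Y" using that unfolding L_def by auto
      ultimately have "w f \<le> w h" using PS_sorted[OF os(1) srt] fY by blast
      then show ?thesis using h by simp
    qed
    have "sum w (L - A) \<le> of_nat (card (L - A)) * th" by (rule sum_bounded_above) (rule le_th)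
    also have "\<dots> \<le> of_nat (card (A - L)) * th" using cc th0 by (intro mult_right_mono) auto
    also have "\<dots> \<le> sum w (A - L)" by (rule sum_bounded_below) (rule th_le)
    finally show ?thesis .
  qed
  then show ?thesis using s1 s2 unfolding L_def by linarith
qed

lemma cost_sum:
  assumes "distinct (map fst h)"
  shows "cost c h = sum c (set (map fst h))"
proof -
  have "cost c h = sum_list (map c (map fst h))" unfolding cost_def
    by (induction h) auto
  also have "\<dots> = sum c (set (map fst h))" using assms by (rule sum_list_distinct_conv_sum_set)
  finally show ?thesis .
qed

lemma prob_compl:
  assumes "X \<subseteq> {1..n}"
  shows "prob n p X = prob n (\<lambda>j. 1 - p j) ({1..n} - X)"
proof -
  have "{1..n} - ({1..n} - X) = X" using assms by auto
  then show ?thesis unfolding prob_def by (simp add: mult.commute)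
qed

lemma sum_compl:
  fixes f :: "nat set \<Rightarrow> real"
  shows "(\<Sum>X\<in>Pow {1..n}. f X) = (\<Sum>Y\<in>Pow {1..n}. f ({1..n} - Y))"
proof (rule sum.reindex_bij_witness[where i="\<lambda>Y. {1..n} - Y" and j="\<lambda>Y. {1..n} - Y"])
  fix a assume "a \<in> Pow {1..n}"
  then have "{1..n} - ({1..n} - a) = a" by auto
  then show "f ({1..n} - ({1..n} - a)) = f a" by simp
qed auto



theorem theorem2:
  fixes n B :: nat and t :: "nat \<Rightarrow> nat" and c p :: "nat \<Rightarrow> real"
    and ord_fail ord_succ :: "nat list"
    and tb :: "(nat \<times> bool) list \<Rightarrow> bool"
    and \<sigma> :: "(nat \<times> bool) list \<Rightarrow> nat"
  assumes c_nonneg: "\<forall>j\<in>{1..n}. c j \<ge> 0"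
    and p_range: "\<forall>j\<in>{1..n}. 0 < p j \<and> p j < 1"
    and t_first: "t 1 = 0"
    and t_last: "t (B + 1) = n + 1"
    and t_incr: "\<forall>i\<in>{1..B}. t i < t (i + 1)"
    and fail_order: "is_order n ord_fail"
    and fail_sorted: "sorted (map (\<lambda>j. c j / (1 - p j)) ord_fail)"
    and succ_order: "is_order n ord_succ"
    and succ_sorted: "sorted (map (\<lambda>j. c j / p j) ord_succ)"
    and opt_valid: "valid_strategy n \<sigma>"
  shows "expected_cost n p c (two_rr_outcome n B t c ord_fail ord_succ tb)
           \<le> 6 * expected_cost n p c (strategy_outcome n B t \<sigma>)"
proof -
  interpret thr n B t using t_first t_last t_incr by unfold_locales
  define N where "N = {1..n}"
  define q where "q = (\<lambda>j. 1 - p j)"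
  define gF where "gF Y = n + 1 - hi ({1..n} - Y)" for Y
  define PS2 where "PS2 X = PS ord_succ lo X" for X
  define PS1 where "PS1 X = PS ord_fail gF ({1..n} - X)" for X
  define OPT where "OPT X = strategy_outcome n B t \<sigma> X" for X
  define T where "T X = set (map fst (OPT X))" for X
  define EO where "EO = expected_cost n p c (strategy_outcome n B t \<sigma>)"
  have of: "distinct ord_fail" "set ord_fail = {1..n}" using fail_order unfolding is_order_def by auto
  have os: "distinct ord_succ" "set ord_succ = {1..n}" using succ_order unfolding is_order_def by auto
  have q01: "\<forall>j\<in>{1..n}. 0 < q j \<and> q j < 1" using p_range unfolding q_def by auto
  have Tf: "distinct (map fst (OPT X)) \<and> T X \<subseteq> {1..n} \<and> determined n B t (T X) X"
    if "X \<subseteq> {1..n}" for X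
    using strat_run_inv[OF opt_valid that, of "[]" n B t] unfolding T_def OPT_def strategy_outcome_def
    by simp
  have costO: "cost c (OPT X) = sum c (T X)" if "X \<subseteq> {1..n}" for X
    unfolding T_def using Tf[OF that] by (intro cost_sum) simp
  have gFc: "gF ({1..n} - X) = n + 1 - hi X" if "X \<subseteq> {1..n}" for X
  proof -
    have "{1..n} - ({1..n} - X) = X" using that by auto
    then show ?thesis unfolding gF_def by simp
  qed
  have dc: "lo X \<le> card (T X \<inter> X)" "gF ({1..n} - X) \<le> card (T X \<inter> ({1..n} - X))"
    if "X \<subseteq> {1..n}" for X
    using det_cards[of "T X" X] Tf[OF that] that gFc[OF that] by auto
  have EO_eq: "EO = (\<Sum>X\<in>Pow {1..n}. prob n p X * sum c (T X))"
    unfolding EO_def expected_cost_def OPT_def[symmetric]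
    by (rule sum.cong[OF refl]) (simp add: costO)
  have EO_nonneg: "EO \<ge> 0" unfolding EO_eq
  proof (rule sum_nonneg)
    fix X assume X: "X \<in> Pow {1..n}"
    then have a: "0 \<le> prob n p X" using prob_nonneg[OF _ p_range] by simp
    have "T X \<subseteq> {1..n}" using Tf X by simp
    then have b: "0 \<le> sum c (T X)" using c_nonneg by (intro sum_nonneg) auto
    show "0 \<le> prob n p X * sum c (T X)" using a b by simp
  qed
  have Tind: "j \<in> T X \<longleftrightarrow> j \<in> T X'" if "X \<subseteq> {1..n}" "X' \<subseteq> {1..n}" "X - {j} = X' - {j}" for X X' j
    using strat_run_indep[OF that, where h="[]" and k=n and \<sigma>=\<sigma> and B=B and t=t] unfolding T_def OPT_def strategy_outcome_def by simp
  have ES: "(\<Sum>X\<in>Pow {1..n}. prob n p X * sum c (PS2 X)) \<le> EO"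
  proof -
    have "(\<Sum>X\<in>Pow {1..n}. prob n p X * sum c (PS2 X))
        \<le> (\<Sum>X\<in>Pow {1..n}. prob n p X * (\<Sum>j\<in>PS2 X \<inter> X. c j / p j))"
    proof (rule swap_gen(1)[OF p_range c_nonneg])
      show "PS2 Y \<subseteq> {1..n}" for Y unfolding PS2_def using PS_sub[of ord_succ lo Y] os by simp
      fix Y j assume "Y \<subseteq> {1..n}" "j \<in> {1..n}" "j \<notin> Y" "j \<in> PS2 Y"
      moreover have "lo Y \<le> lo (insert j Y)" using \<open>Y \<subseteq> {1..n}\<close> \<open>j \<in> {1..n}\<close>
        by (intro lo_hi_mono(1)) auto
      ultimately show "j \<in> PS2 (insert j Y)" unfolding PS2_def
        by (intro PS_mono_mem) auto
    qed
    also have "\<dots> \<le> (\<Sum>X\<in>Pow {1..n}. prob n p X * (\<Sum>j\<in>T X \<inter> X. c j / p j))"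
    proof (rule sum_mono)
      fix X assume X: "X \<in> Pow {1..n}"
      have "(\<Sum>j\<in>PS2 X \<inter> X. c j / p j) \<le> (\<Sum>j\<in>T X \<inter> X. c j / p j)"
        unfolding PS2_def
      proof (rule W_lemma[OF os succ_sorted])
        show "\<forall>j\<in>{1..n}. 0 \<le> c j / p j" using c_nonneg p_range by (auto intro: divide_nonneg_pos)
        show "X \<subseteq> {1..n}" using X by simp
        show "T X \<inter> X \<subseteq> X" by simp
        show "lo X \<le> card X" using lo_hi X by simp
        show "lo X \<le> card (T X \<inter> X)" using dc X by simp
      qed
      then show "prob n p X * (\<Sum>j\<in>PS2 X \<inter> X. c j / p j) \<le> prob n p X * (\<Sum>j\<in>T X \<inter> X. c j / p j)"
        using prob_nonneg[OF _ p_range, of X] X by (intro mult_left_mono) auto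
    qed
    also have "\<dots> = (\<Sum>X\<in>Pow {1..n}. prob n p X * sum c (T X))"
    proof (rule swap_gen(2)[OF p_range c_nonneg, symmetric])
      show "T Y \<subseteq> {1..n}" if "Y \<subseteq> {1..n}" for Y using Tf[OF that] by simp
      fix Y j assume Y: "Y \<subseteq> {1..n}" "j \<in> {1..n}" "j \<notin> Y"
      then have "Y - {j} = insert j Y - {j}" "insert j Y \<subseteq> {1..n}" by auto
      then show "j \<in> T Y \<Longrightarrow> j \<in> T (insert j Y)" "j \<in> T (insert j Y) \<Longrightarrow> j \<in> T Y"
        using Tind[of Y "insert j Y" j] Y by auto
    qed
    finally show ?thesis unfolding EO_eq .
  qed
  have EF: "(\<Sum>X\<in>Pow {1..n}. prob n p X * sum c (PS1 X)) \<le> EO"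
  proof -
    have "(\<Sum>X\<in>Pow {1..n}. prob n p X * sum c (PS1 X))
        = (\<Sum>Y\<in>Pow {1..n}. prob n p ({1..n} - Y) * sum c (PS1 ({1..n} - Y)))"
      by (rule sum_compl)
    also have "\<dots> = (\<Sum>Y\<in>Pow {1..n}. prob n q Y * sum c (PS ord_fail gF Y))"
    proof (rule sum.cong[OF refl])
      fix Y assume Y: "Y \<in> Pow {1..n}"
      then have e: "{1..n} - ({1..n} - Y) = Y" by auto
      have "prob n p ({1..n} - Y) = prob n q Y" using prob_compl[of "{1..n} - Y" n p] e unfolding q_def by simp
      then show "prob n p ({1..n} - Y) * sum c (PS1 ({1..n} - Y)) = prob n q Y * sum c (PS ord_fail gF Y)"
        unfolding PS1_def e by simp
    qed
    also have "\<dots> \<le> (\<Sum>Y\<in>Pow {1..n}. prob n q Y * (\<Sum>j\<in>PS ord_fail gF Y \<inter> Y. c j / q j))"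
    proof (rule swap_gen(1)[OF q01 c_nonneg])
      show "PS ord_fail gF Y \<subseteq> {1..n}" for Y using PS_sub[of ord_fail gF Y] of by simp
      fix Y j assume Y: "Y \<subseteq> {1..n}" "j \<in> {1..n}" "j \<notin> Y" "j \<in> PS ord_fail gF Y"
      have "hi ({1..n} - insert j Y) \<le> hi ({1..n} - Y)" by (rule lo_hi_mono(2)) auto
      then have "gF Y \<le> gF (insert j Y)" unfolding gF_def by simp
      then show "j \<in> PS ord_fail gF (insert j Y)" using Y by (intro PS_mono_mem) auto
    qed
    also have "\<dots> \<le> (\<Sum>Y\<in>Pow {1..n}. prob n q Y * (\<Sum>j\<in>T ({1..n} - Y) \<inter> Y. c j / q j))"
    proof (rule sum_mono)
      fix Y assume Y: "Y \<in> Pow {1..n}"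
      define X where "X = {1..n} - Y"
      have X: "X \<subseteq> {1..n}" and YX: "Y = {1..n} - X" using Y unfolding X_def by auto
      have "(\<Sum>j\<in>PS ord_fail gF Y \<inter> Y. c j / q j) \<le> (\<Sum>j\<in>T X \<inter> Y. c j / q j)"
      proof (rule W_lemma[OF of])
        show "sorted (map (\<lambda>j. c j / q j) ord_fail)" using fail_sorted unfolding q_def .
        show "\<forall>j\<in>{1..n}. 0 \<le> c j / q j" using c_nonneg q01 by (auto intro: divide_nonneg_pos)
        show "Y \<subseteq> {1..n}" using Y by simp
        show "T X \<inter> Y \<subseteq> Y" by simp
        have "card X < hi X" using lo_hi[OF X] by simp
        moreover have "card Y = n - card X" unfolding YX using X by (simp add: card_Diff_subset finite_subset)
        ultimately show "gF Y \<le> card Y" using gFc[OF X] YX by simp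
        show "gF Y \<le> card (T X \<inter> Y)" using dc(2)[OF X] YX by simp
      qed
      then show "prob n q Y * (\<Sum>j\<in>PS ord_fail gF Y \<inter> Y. c j / q j) \<le> prob n q Y * (\<Sum>j\<in>T ({1..n} - Y) \<inter> Y. c j / q j)"
        using prob_nonneg[OF _ q01, of Y] Y unfolding X_def by (intro mult_left_mono) auto
    qed
    also have "\<dots> = (\<Sum>Y\<in>Pow {1..n}. prob n q Y * sum c (T ({1..n} - Y)))"
    proof (rule swap_gen(2)[OF q01 c_nonneg, symmetric])
      show "T ({1..n} - Y) \<subseteq> {1..n}" if "Y \<subseteq> {1..n}" for Y using Tf[of "{1..n} - Y"] by simp
      fix Y j assume Y: "Y \<subseteq> {1..n}" "j \<in> {1..n}" "j \<notin> Y"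
      then have "({1..n} - Y) - {j} = ({1..n} - insert j Y) - {j}" by auto
      then show "j \<in> T ({1..n} - Y) \<Longrightarrow> j \<in> T ({1..n} - insert j Y)"
          "j \<in> T ({1..n} - insert j Y) \<Longrightarrow> j \<in> T ({1..n} - Y)"
        using Tind[of "{1..n} - Y" "{1..n} - insert j Y" j] by auto
    qed
    also have "\<dots> = (\<Sum>Y\<in>Pow {1..n}. prob n p ({1..n} - Y) * sum c (T ({1..n} - Y)))"
    proof (rule sum.cong[OF refl])
      fix Y assume Y: "Y \<in> Pow {1..n}"
      then have e: "{1..n} - ({1..n} - Y) = Y" by auto
      have "prob n p ({1..n} - Y) = prob n q Y" using prob_compl[of "{1..n} - Y" n p] e unfolding q_def by simp
      then show "prob n q Y * sum c (T ({1..n} - Y)) = prob n p ({1..n} - Y) * sum c (T ({1..n} - Y))" by simp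
    qed
    also have "\<dots> = (\<Sum>X\<in>Pow {1..n}. prob n p X * sum c (T X))"
      by (rule sum_compl[symmetric])
    finally show ?thesis unfolding EO_eq .
  qed
  have RR: "cost c (two_rr_outcome n B t c ord_fail ord_succ tb X) \<le> 2 * (sum c (PS1 X) + sum c (PS2 X))"
    if X: "X \<subseteq> {1..n}" for X
    unfolding two_rr_outcome_def
  proof (rule rr_bound[OF of(2) os(2) c_nonneg])
    show "PS1 X \<subseteq> {1..n}" unfolding PS1_def using PS_sub[of ord_fail gF] of by auto
    show "PS2 X \<subseteq> {1..n}" unfolding PS2_def using PS_sub[of ord_succ lo] os by auto
    show "insert (hd (filter (\<lambda>j. j \<notin> T') ord_fail)) (set (takeWhile (\<lambda>j. j \<in> T') ord_fail)) \<subseteq> PS1 X"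
      if "y \<in> PS1 X" "y \<notin> T'" for T' y
      using first_untested_PS[OF of(1), of y gF "{1..n} - X" T'] that unfolding PS1_def by auto
    show "insert (hd (filter (\<lambda>j. j \<notin> T') ord_succ)) (set (takeWhile (\<lambda>j. j \<in> T') ord_succ)) \<subseteq> PS2 X"
      if "y \<in> PS2 X" "y \<notin> T'" for T' y
      using first_untested_PS[OF os(1), of y lo X T'] that X unfolding PS2_def by (auto intro: finite_subset)
    show "determined n B t T' X" if T': "T' \<subseteq> {1..n}" "PS1 X \<subseteq> T'" "PS2 X \<subseteq> T'" for T'
    proof (rule cards_det[OF T' (1) X])
      have "lo X = card (X \<inter> PS ord_succ lo X)" using PS_card[OF os(1), of X lo] X os(2) lo_hi[OF X] by simp
      also have "\<dots> \<le> card (T' \<inter> X)" using T' unfolding PS2_def by (intro card_mono) (auto intro: finite_subset)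
      finally show "lo X \<le> card (T' \<inter> X)" .
      have cY: "gF ({1..n} - X) \<le> card ({1..n} - X)"
      proof -
        have "card X < hi X" using lo_hi[OF X] by simp
        moreover have "card ({1..n} - X) = n - card X" using X by (simp add: card_Diff_subset finite_subset)
        ultimately show ?thesis using gFc[OF X] by simp
      qed
      have "n + 1 - hi X = gF ({1..n} - X)" using gFc[OF X] by simp
      also have "\<dots> = card (({1..n} - X) \<inter> PS ord_fail gF ({1..n} - X))"
        using PS_card[OF of(1), of "{1..n} - X" gF] of(2) cY by auto
      also have "\<dots> \<le> card (T' \<inter> ({1..n} - X))" using T' unfolding PS1_def by (intro card_mono) auto
      finally show "n + 1 - hi X \<le> card (T' \<inter> ({1..n} - X))" .
    qed
    show "determined n B t {1..n} X"
    proof (rule cards_det[OF _ X])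
      have e1: "{1..n} \<inter> X = X" using X by auto
      have e2: "{1..n} \<inter> ({1..n} - X) = {1..n} - X" by auto
      have c2: "card ({1..n} - X) = n - card X" using X by (simp add: card_Diff_subset finite_subset)
      show "lo X \<le> card ({1..n} \<inter> X)" using e1 lo_hi[OF X] by simp
      show "n + 1 - hi X \<le> card ({1..n} \<inter> ({1..n} - X))" using e2 c2 lo_hi[OF X] by simp
    qed simp
    have tf: "takeWhile (\<lambda>j. False) xs = []" for xs :: "nat list" by (cases xs) auto
    have p1: "0 \<le> sum c (PS1 X)" using c_nonneg PS_sub[of ord_fail gF] of unfolding PS1_def
      by (intro sum_nonneg) auto
    have p2: "0 \<le> sum c (PS2 X)" using c_nonneg PS_sub[of ord_succ lo] os unfolding PS2_def
      by (intro sum_nonneg) auto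
    show "0 \<le> sum c (PS1 X) + sum c (PS2 X)" using p1 p2 by simp
    show "0 \<le> sum c (PS1 X) + sum c (PS2 X)" using p1 p2 by simp
    show "0 \<le> sum c (set (takeWhile (\<lambda>j. j \<in> set (map fst [])) ord_fail))" by (simp add: tf)
    show "0 \<le> sum c (set (takeWhile (\<lambda>j. j \<in> set (map fst [])) ord_succ))" by (simp add: tf)
  qed (auto simp: cost_def)
  have "expected_cost n p c (two_rr_outcome n B t c ord_fail ord_succ tb)
      \<le> (\<Sum>X\<in>Pow {1..n}. prob n p X * (2 * (sum c (PS1 X) + sum c (PS2 X))))"
    unfolding expected_cost_def
    by (rule sum_mono, rule mult_left_mono) (use RR prob_nonneg[OF _ p_range] in auto)
  also have "\<dots> = 2 * ((\<Sum>X\<in>Pow {1..n}. prob n p X * sum c (PS1 X)) + (\<Sum>X\<in>Pow {1..n}. prob n p X * sum c (PS2 X)))"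
    by (simp add: sum_distrib_left sum.distrib algebra_simps)
  also have "\<dots> \<le> 2 * (EO + EO)" using ES EF by simp
  also have "\<dots> \<le> 6 * EO" using EO_nonneg by simp
  finally show ?thesis unfolding EO_def .
qed



end
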